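(* Let $\mathfrak{S}=(\mathcal{X},\mathsf{S},\gamma,(\Lambda_{a})_{a\in\mathcal{A}})$ be a spectral decomposition system for the Euclidean space $\mathfrak{H}$ and let $D$ be a nonempty $\mathsf{S}$-invariant subset of $\mathcal{X}$. Then: (i) $\operatorname{conv}\gamma^{-1}(D)=\gamma^{-1}(\operatorname{conv}D)$; (ii) if $D$ is convex, then $\operatorname{ext}\gamma^{-1}(D)=\gamma^{-1}(\operatorname{ext}D)$.
   Context: A Euclidean space is a finite-dimensional real inner product space; inner products are written $\langle\cdot,\cdot\rangle$ and norms $\|\cdot\|$. Let $\mathfrak{H}$ and $\mathcal{X}$ be Euclidean spaces, let $\mathsf{S}$ be a group acting on $\mathcal{X}$ by linear isometries, let $\gamma\colon\mathfrak{H}\to\mathcal{X}$, and let $(\Lambda_a)_{a\in\mathcal{A}}$ be a family of linear operators from $\mathcal{X}$ to $\mathfrak{H}$. The orbit of $x$ is $\mathsf{S}\cdot x=\{s\cdot x: s\in\mathsf{S}\}$; a map $f$ on $\mathcal{X}$ is $\mathsf{S}$-invariant if $f(s\cdot x)=f(x)$ for all $s,x$; a subset $D$ of $\mathcal{X}$ is $\mathsf{S}$-invariant if $s\cdot x\in D$ whenever $x\in D$, $s\in\mathsf{S}$. The tuple is a spectral decomposition system for $\mathfrak{H}$ if: [A] every $\Lambda_a$ is an isometry; [B] there exists an $\mathsf{S}$-invariant $\tau\colon\mathcal{X}\to\mathcal{X}$ with $\tau(x)\in\mathsf{S}\cdot x$ for all $x$ and $\gamma\circ\Lambda_a=\tau$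 for all $a$; [C] for every $X\in\mathfrak{H}$ there is $a$ with $X=\Lambda_a\gamma(X)$; [D] $\langle X,Y\rangle\leq\langle\gamma(X),\gamma(Y)\rangle$ for all $X,Y\in\mathfrak{H}$. $\operatorname{conv}C$ is the convex hull of $C$; for convex $C$, $\operatorname{ext}C$ is its set of extreme points. *)

theory Defs
  imports "HOL-Analysis.Analysis" "HOL-Algebra.Group"
begin

definition isometric_action :: "('g, 'm) monoid_scheme \<Rightarrow> ('g \<Rightarrow> 'x::euclidean_space \<Rightarrow> 'x) \<Rightarrow> bool" where
  "isometric_action G act \<longleftrightarrow>
     group G \<and>
     (\<forall>x. act \<one>\<^bsub>G\<^esub> x = x) \<and>
     (\<forall>g\<in>carrier G. \<forall>h\<in>carrier G. \<forall>x. act (g \<otimes>\<^bsub>G\<^esub> h) x = act g (act h x)) \<and>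
     (\<forall>g\<in>carrier G. linear (act g) \<and> (\<forall>x. norm (act g x) = norm x))"

definition orbit :: "('g, 'm) monoid_scheme \<Rightarrow> ('g \<Rightarrow> 'x \<Rightarrow> 'x) \<Rightarrow> 'x \<Rightarrow> 'x set" where
  "orbit G act x = {act g x | g. g \<in> carrier G}"

definition invariant_fun :: "('g, 'm) monoid_scheme \<Rightarrow> ('g \<Rightarrow> 'x \<Rightarrow> 'x) \<Rightarrow> ('x \<Rightarrow> 'b) \<Rightarrow> bool" where
  "invariant_fun G act f \<longleftrightarrow> (\<forall>g\<in>carrier G. \<forall>x. f (act g x) = f x)"

definition invariant_set :: "('g, 'm) monoid_scheme \<Rightarrow> ('g \<Rightarrow> 'x \<Rightarrow> 'x) \<Rightarrow> 'x set \<Rightarrow> bool" where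
  "invariant_set G act D \<longleftrightarrow> (\<forall>g\<in>carrier G. \<forall>x\<in>D. act g x \<in> D)"

definition spectral_decomposition_system ::
  "('g, 'm) monoid_scheme \<Rightarrow> ('g \<Rightarrow> 'x::euclidean_space \<Rightarrow> 'x) \<Rightarrow> ('h::euclidean_space \<Rightarrow> 'x)
   \<Rightarrow> ('a \<Rightarrow> 'x \<Rightarrow> 'h) \<Rightarrow> bool" where
  "spectral_decomposition_system G act \<gamma> \<Lambda> \<longleftrightarrow>
     isometric_action G act \<and>
     (\<forall>a. linear (\<Lambda> a) \<and> (\<forall>x. norm (\<Lambda> a x) = norm x)) \<and>
     (\<exists>\<tau>. invariant_fun G act \<tau> \<and> (\<forall>x. \<tau> x \<in> orbit G act x) \<and> (\<forall>a. \<gamma> \<circ> \<Lambda> a = \<tau>)) \<and>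
     (\<forall>X. \<exists>a. X = \<Lambda> a (\<gamma> X)) \<and>
     (\<forall>X Y. inner X Y \<le> inner (\<gamma> X) (\<gamma> Y))"

definition ext :: "'v::real_vector set \<Rightarrow> 'v set" where
  "ext C = {x. x extreme_point_of C}"

end

theory Submission
  imports Defs
begin

lemma lin_norm_inner:
  fixes f :: "'u::real_inner \<Rightarrow> 'v::real_inner"
  assumes "linear f" "\<And>x. norm (f x) = norm x"
  shows "inner (f x) (f y) = inner x y"
proof -
  have "norm (f (x + y))^2 = norm (x + y)^2" using assms(2) by simp
  hence "norm (f x + f y)^2 = norm (x + y)^2" using linear_add[OF assms(1)] by simp
  moreover have "norm (f x)^2 = norm x^2" "norm (f y)^2 = norm y^2" using assms(2) by auto
  ultimately show ?thesis
    by (simp add: power2_norm_eq_inner inner_add_left inner_add_right inner_commute)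
qed

lemma eq_of_inner_norm:
  fixes x y :: "'u::real_inner"
  assumes "norm x = norm y" "inner x y \<ge> norm x ^ 2"
  shows "x = y"
proof -
  have "norm (x - y)^2 = norm x^2 + norm y^2 - 2 * inner x y"
    by (simp add: power2_norm_eq_inner inner_diff_left inner_diff_right inner_commute)
  also have "\<dots> \<le> 0" using assms by simp
  finally show ?thesis by simp
qed

theorem proposition4p9:
  fixes G :: "('g, 'm) monoid_scheme"
    and act :: "'g \<Rightarrow> 'x::euclidean_space \<Rightarrow> 'x"
    and \<gamma> :: "'h::euclidean_space \<Rightarrow> 'x"
    and \<Lambda> :: "'a \<Rightarrow> 'x \<Rightarrow> 'h"
    and D :: "'x set"
  assumes "spectral_decomposition_system G act \<gamma> \<Lambda>"
    and "D \<noteq> {}"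
    and "invariant_set G act D"
  shows "convex hull (\<gamma> -` D) = \<gamma> -` (convex hull D) \<and>
         (convex D \<longrightarrow> ext (\<gamma> -` D) = \<gamma> -` (ext D))"
proof -
  note sds = assms(1)[unfolded spectral_decomposition_system_def isometric_action_def]
  have grp: "group G" using sds by blast
  have act1: "\<And>x. act \<one>\<^bsub>G\<^esub> x = x" using sds by blast
  have actmul: "\<And>g h x. g \<in> carrier G \<Longrightarrow> h \<in> carrier G \<Longrightarrow> act (g \<otimes>\<^bsub>G\<^esub> h) x = act g (act h x)"
    using sds by blast
  have actlin: "\<And>g. g \<in> carrier G \<Longrightarrow> linear (act g)" using sds by blast
  have actnorm: "\<And>g x. g \<in> carrier G \<Longrightarrow> norm (act g x) = norm x" using sds by blast
  have Llin: "\<And>a. linear (\<Lambda> a)" using sds by blast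
  have Lnorm: "\<And>a x. norm (\<Lambda> a x) = norm x" using sds by blast
  obtain \<tau> where tinv: "invariant_fun G act \<tau>" and torb: "\<And>x. \<tau> x \<in> orbit G act x"
    and gL: "\<And>a. \<gamma> \<circ> \<Lambda> a = \<tau>" using sds by blast
  have tinv': "\<And>g x. g \<in> carrier G \<Longrightarrow> \<tau> (act g x) = \<tau> x" using tinv by (simp add: invariant_fun_def)
  have gL': "\<And>a x. \<gamma> (\<Lambda> a x) = \<tau> x" using gL by (metis comp_apply)
  have dec: "\<And>X. \<exists>a. X = \<Lambda> a (\<gamma> X)" using sds by blast
  have ineq: "\<And>X Y. inner X Y \<le> inner (\<gamma> X) (\<gamma> Y)" using sds by blast
  have torb': "\<exists>g\<in>carrier G. \<tau> x = act g x" for x using torb[of x] by (auto simp: orbit_def)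
  have Dinv: "\<And>g x. g \<in> carrier G \<Longrightarrow> x \<in> D \<Longrightarrow> act g x \<in> D"
    using assms(3) by (simp add: invariant_set_def)
  have actinv: "act (inv\<^bsub>G\<^esub> g) (act g x) = x" "act g (act (inv\<^bsub>G\<^esub> g) x) = x"
    if "g \<in> carrier G" for g x
    using that actmul[of "inv\<^bsub>G\<^esub> g" g x] actmul[of g "inv\<^bsub>G\<^esub> g" x] act1 grp
    by (auto simp: group.l_inv group.r_inv group.inv_closed)
  have actinner: "inner (act g v) w = inner v (act (inv\<^bsub>G\<^esub> g) w)" if "g \<in> carrier G" for g v w
  proof -
    have "inner (act g v) w = inner (act g v) (act g (act (inv\<^bsub>G\<^esub> g) w))" using actinv[OF that] by simp
    also have "\<dots> = inner v (act (inv\<^bsub>G\<^esub> g) w)"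
      by (rule lin_norm_inner[OF actlin[OF that] actnorm[OF that]])
    finally show ?thesis .
  qed
  have invc: "g \<in> carrier G \<Longrightarrow> inv\<^bsub>G\<^esub> g \<in> carrier G" for g using grp by (simp add: group.inv_closed)
  have Linner: "\<And>a x y. inner (\<Lambda> a x) (\<Lambda> a y) = inner x y"
    using lin_norm_inner[OF Llin Lnorm] by blast
  have gnorm: "norm (\<gamma> W) = norm W" for W using dec[of W] Lnorm by metis
  have tnorm: "norm (\<tau> x) = norm x" for x using torb'[of x] actnorm by auto
  have tineq: "inner u x \<le> inner (\<tau> u) (\<tau> x)" for u x
  proof -
    obtain a where "(0::'h) = \<Lambda> a (\<gamma> 0)" using dec by blast
    have "inner u x = inner (\<Lambda> a u) (\<Lambda> a x)" using Linner by simp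
    also have "\<dots> \<le> inner (\<gamma> (\<Lambda> a u)) (\<gamma> (\<Lambda> a x))" by (rule ineq)
    finally show ?thesis using gL' by simp
  qed
  define Ls where "Ls a = adjoint (\<Lambda> a)" for a
  have Lslin: "linear (Ls a)" for a unfolding Ls_def by (rule adjoint_linear[OF Llin])
  have Ls1: "inner v (Ls a W) = inner (\<Lambda> a v) W" for a v W
    unfolding Ls_def by (rule adjoint_clauses(1)[OF Llin])
  have LsL: "Ls a (\<Lambda> a v) = v" for a v
  proof -
    have "inner (Ls a (\<Lambda> a v) - v) w = 0" for w
      using Ls1[of w a "\<Lambda> a v"] Linner[of a w v]
      by (simp add: inner_diff_left inner_diff_right inner_commute)
    from this[of "Ls a (\<Lambda> a v) - v"] show ?thesis by simp
  qed
  have gLs: "\<gamma> W = Ls a W" if "W = \<Lambda> a (\<gamma> W)" for a W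
    using LsL[of a "\<gamma> W"] that by simp
  have orb_closed: "closed (orbit G act x)" for x
  proof -
    have "closure (orbit G act x) \<subseteq> orbit G act x"
    proof
      fix x' assume x': "x' \<in> closure (orbit G act x)"
      have "orbit G act x \<subseteq> {w. inner x' w \<le> inner (\<tau> x') (\<tau> x)}"
        using tineq[of x'] tinv' by (auto simp: orbit_def) (metis (no_types))
      hence "closure (orbit G act x) \<subseteq> {w. inner x' w \<le> inner (\<tau> x') (\<tau> x)}"
        by (intro closure_minimal closed_halfspace_le)
      hence i1: "inner x' x' \<le> inner (\<tau> x') (\<tau> x)" using x' by blast
      have "orbit G act x \<subseteq> sphere 0 (norm x)" using actnorm by (auto simp: orbit_def)
      hence "closure (orbit G act x) \<subseteq> sphere 0 (norm x)"
        by (intro closure_minimal closed_sphere)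
      hence n1: "norm x' = norm x" using x' by auto
      have "inner x' x' = inner x x" using n1 by (metis power2_norm_eq_inner)
      hence "\<tau> x' = \<tau> x"
        using eq_of_inner_norm[of "\<tau> x'" "\<tau> x"] tnorm n1 i1
        by (simp add: power2_norm_eq_inner)
      then obtain g h where g: "g \<in> carrier G" "\<tau> x = act g x" and h: "h \<in> carrier G" "\<tau> x' = act h x'"
        using torb' by metis
      have "x' = act (inv\<^bsub>G\<^esub> h) (act g x)" using actinv(1)[OF h(1)] h g \<open>\<tau> x' = \<tau> x\<close> by metis
      also have "\<dots> = act (inv\<^bsub>G\<^esub> h \<otimes>\<^bsub>G\<^esub> g) x" using actmul invc h g by simp
      moreover have "inv\<^bsub>G\<^esub> h \<otimes>\<^bsub>G\<^esub> g \<in> carrier G"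
        using grp h g by (simp add: group.inv_closed monoid.m_closed group.is_monoid)
      ultimately show "x' \<in> orbit G act x" by (auto simp: orbit_def)
    qed
    thus ?thesis using closure_subset_eq by blast
  qed
  have orb_compact: "compact (orbit G act x)" for x
  proof -
    have "orbit G act x \<subseteq> sphere 0 (norm x)" using actnorm by (auto simp: orbit_def)
    hence "bounded (orbit G act x)" using bounded_subset bounded_sphere by blast
    thus ?thesis using orb_closed compact_eq_bounded_closed by blast
  qed
  have key: "Ls a W \<in> convex hull (orbit G act (\<gamma> W))" for a W
  proof (rule ccontr)
    let ?K = "convex hull (orbit G act (\<gamma> W))"
    assume nk: "Ls a W \<notin> ?K"
    have "closed ?K" using compact_convex_hull[OF orb_compact] compact_imp_closed by blast
    then obtain u b where ub: "inner u (Ls a W) < b" "\<forall>k\<in>?K. inner u k > b"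
      using separating_hyperplane_closed_point[OF convex_convex_hull _ nk] by blast
    obtain g where g: "g \<in> carrier G" "\<tau> (-u) = act g (-u)" using torb' by blast
    have "inner (-u) (Ls a W) = inner W (\<Lambda> a (-u))" using Ls1 by (simp add: inner_commute)
    also have "\<dots> \<le> inner (\<gamma> W) (\<tau> (-u))" using ineq[of W "\<Lambda> a (-u)"] gL' by simp
    also have "\<dots> = inner (-u) (act (inv\<^bsub>G\<^esub> g) (\<gamma> W))" using g actinner by (simp add: inner_commute)
    finally have "inner (-u) (Ls a W) \<le> inner (-u) (act (inv\<^bsub>G\<^esub> g) (\<gamma> W))" .
    moreover have "act (inv\<^bsub>G\<^esub> g) (\<gamma> W) \<in> ?K"
      using g invc by (intro hull_inc) (auto simp: orbit_def)
    ultimately show False using ub by force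
  qed
  have M: "Ls a W \<in> C" if "convex C" "invariant_set G act C" "\<gamma> W \<in> C" for a W C
  proof -
    have "orbit G act (\<gamma> W) \<subseteq> C" using that by (auto simp: orbit_def invariant_set_def)
    hence "convex hull (orbit G act (\<gamma> W)) \<subseteq> C" using that(1) by (intro hull_minimal)
    thus ?thesis using key by blast
  qed
  have cDinv: "invariant_set G act (convex hull D)"
    unfolding invariant_set_def
  proof (intro ballI)
    fix g y assume g: "g \<in> carrier G" and y: "y \<in> convex hull D"
    have "act g y \<in> act g ` (convex hull D)" using y by blast
    also have "\<dots> = convex hull (act g ` D)" by (rule convex_hull_linear_image[OF actlin[OF g]])
    also have "\<dots> \<subseteq> convex hull D" using Dinv g by (intro hull_mono) auto
    finally show "act g y \<in> convex hull D" .
  qed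
  have LD: "\<Lambda> a d \<in> \<gamma> -` D" if "d \<in> D" for a d
    using gL' torb'[of d] Dinv that by auto
  have part1: "convex hull (\<gamma> -` D) = \<gamma> -` (convex hull D)"
  proof
    have "convex (\<gamma> -` (convex hull D))"
    proof (rule convexI)
      fix X Y and u v :: real
      assume X: "X \<in> \<gamma> -` (convex hull D)" and Y: "Y \<in> \<gamma> -` (convex hull D)"
        and uv: "0 \<le> u" "0 \<le> v" "u + v = 1"
      obtain a where a: "u *\<^sub>R X + v *\<^sub>R Y = \<Lambda> a (\<gamma> (u *\<^sub>R X + v *\<^sub>R Y))" using dec by blast
      have "\<gamma> (u *\<^sub>R X + v *\<^sub>R Y) = Ls a (u *\<^sub>R X + v *\<^sub>R Y)" by (rule gLs[OF a])
      also have "\<dots> = u *\<^sub>R Ls a X + v *\<^sub>R Ls a Y"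
        by (simp only: linear_add[OF Lslin] linear_scale[OF Lslin])
      also have "\<dots> \<in> convex hull D"
      proof (rule convexD[OF convex_convex_hull _ _ uv])
        show "Ls a X \<in> convex hull D" using M[OF convex_convex_hull cDinv] X by blast
        show "Ls a Y \<in> convex hull D" using M[OF convex_convex_hull cDinv] Y by blast
      qed
      finally show "u *\<^sub>R X + v *\<^sub>R Y \<in> \<gamma> -` (convex hull D)" by simp
    qed
    moreover have "\<gamma> -` D \<subseteq> \<gamma> -` (convex hull D)" by (rule vimage_mono[OF hull_subset])
    ultimately show "convex hull (\<gamma> -` D) \<subseteq> \<gamma> -` (convex hull D)" by (simp add: hull_minimal)
  next
    show "\<gamma> -` (convex hull D) \<subseteq> convex hull (\<gamma> -` D)"
    proof
      fix Z assume Z: "Z \<in> \<gamma> -` (convex hull D)"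
      obtain a where a: "Z = \<Lambda> a (\<gamma> Z)" using dec by blast
      have "\<Lambda> a (\<gamma> Z) \<in> \<Lambda> a ` (convex hull D)" using Z by simp
      hence "Z \<in> \<Lambda> a ` (convex hull D)" using a by metis
      also have "\<dots> = convex hull (\<Lambda> a ` D)" by (rule convex_hull_linear_image[OF Llin])
      also have "\<dots> \<subseteq> convex hull (\<gamma> -` D)" using LD by (intro hull_mono) auto
      finally show "Z \<in> convex hull (\<gamma> -` D)" .
    qed
  qed
  have part2: "ext (\<gamma> -` D) = \<gamma> -` (ext D)" if cD: "convex D"
  proof
    show "ext (\<gamma> -` D) \<subseteq> \<gamma> -` (ext D)"
    proof
      fix X assume "X \<in> ext (\<gamma> -` D)"
      hence X: "X extreme_point_of (\<gamma> -` D)" by (simp add: ext_def)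
      obtain a where a: "X = \<Lambda> a (\<gamma> X)" using dec by blast
      have "\<gamma> X extreme_point_of D"
        unfolding extreme_point_of_def
      proof (intro conjI ballI)
        show "\<gamma> X \<in> D" using X by (simp add: extreme_point_of_def)
        fix p q assume p: "p \<in> D" and q: "q \<in> D"
        show "\<gamma> X \<notin> open_segment p q"
        proof
          assume "\<gamma> X \<in> open_segment p q"
          then obtain t where t: "p \<noteq> q" "0 < t" "t < 1" "\<gamma> X = (1 - t) *\<^sub>R p + t *\<^sub>R q"
            by (auto simp: in_segment)
          have "X = (1 - t) *\<^sub>R \<Lambda> a p + t *\<^sub>R \<Lambda> a q"
            proof -
            have "X = \<Lambda> a ((1 - t) *\<^sub>R p + t *\<^sub>R q)" using a t(4) by metis
            thus ?thesis by (simp add: linear_add[OF Llin] linear_scale[OF Llin])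
          qed
          moreover have "\<Lambda> a p \<noteq> \<Lambda> a q" using t(1) LsL by metis
          ultimately have "X \<in> open_segment (\<Lambda> a p) (\<Lambda> a q)" using t by (auto simp: in_segment)
          thus False using X LD p q by (auto simp: extreme_point_of_def)
        qed
      qed
      thus "X \<in> \<gamma> -` (ext D)" by (simp add: ext_def)
    qed
  next
    show "\<gamma> -` (ext D) \<subseteq> ext (\<gamma> -` D)"
    proof
      fix X assume "X \<in> \<gamma> -` (ext D)"
      hence gX: "\<gamma> X extreme_point_of D" by (simp add: ext_def)
      obtain a where a: "X = \<Lambda> a (\<gamma> X)" using dec by blast
      have same: "Y = X" if Y: "Y \<in> \<gamma> -` D" and eq: "Ls a Y = \<gamma> X" for Y
      proof -
        have sub: "convex hull (orbit G act (\<gamma> Y)) \<subseteq> D"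
          using Y cD Dinv by (intro hull_minimal) (auto simp: orbit_def)
        have "\<gamma> X \<in> convex hull (orbit G act (\<gamma> Y))" using key eq by metis
        hence "\<gamma> X extreme_point_of (convex hull (orbit G act (\<gamma> Y)))"
          using gX sub by (auto simp: extreme_point_of_def)
        hence "\<gamma> X \<in> orbit G act (\<gamma> Y)" by (rule extreme_point_of_convex_hull)
        hence nY: "norm Y = norm X" using actnorm gnorm by (auto simp: orbit_def) (metis gnorm)
        have "inner Y X = inner (Ls a Y) (\<gamma> X)"
          using Ls1[of "\<gamma> X" a Y] a[symmetric] by (simp add: inner_commute)
        also have "\<dots> = norm X ^ 2" using eq gnorm by (simp add: dot_square_norm)
        finally show ?thesis using eq_of_inner_norm[OF nY] nY by simp
      qed
      have "X extreme_point_of (\<gamma> -` D)"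
        unfolding extreme_point_of_def
      proof (intro conjI ballI)
        show "X \<in> \<gamma> -` D" using gX by (simp add: extreme_point_of_def)
        fix Y Z assume Y: "Y \<in> \<gamma> -` D" and Z: "Z \<in> \<gamma> -` D"
        show "X \<notin> open_segment Y Z"
        proof
          assume "X \<in> open_segment Y Z"
          then obtain t where t: "Y \<noteq> Z" "0 < t" "t < 1" "X = (1 - t) *\<^sub>R Y + t *\<^sub>R Z"
            by (auto simp: in_segment)
          have e: "\<gamma> X = (1 - t) *\<^sub>R Ls a Y + t *\<^sub>R Ls a Z"
            using gLs[OF a] t(4) by (simp add: linear_add[OF Lslin] linear_scale[OF Lslin])
          have pY: "Ls a Y \<in> D" "Ls a Z \<in> D" using M[OF cD assms(3)] Y Z by auto
          have "Ls a Y = Ls a Z"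
          proof (rule ccontr)
            assume "Ls a Y \<noteq> Ls a Z"
            hence "\<gamma> X \<in> open_segment (Ls a Y) (Ls a Z)" using e t by (auto simp: in_segment)
            thus False using gX pY by (auto simp: extreme_point_of_def)
          qed
          hence "\<gamma> X = Ls a Y" "\<gamma> X = Ls a Z" using e by (auto simp: algebra_simps)
          hence "Y = X" "Z = X" using same[OF Y] same[OF Z] by auto
          thus False using t(1) by simp
        qed
      qed
      thus "X \<in> ext (\<gamma> -` D)" by (simp add: ext_def)
    qed
  qed
  show ?thesis using part1 part2 by blast
qed

end
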